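(* Let $m\ge2$, $n\ge1$, and let $\rho:BS(1,m)\to T_n(\mathbb Z[1/m])$ be a special representation. Then $\rho(BS(1,m))$ has the congruence subgroup property.
   Context: $BS(1,m)=\langle a,t\mid tat^{-1}=a^m\rangle$ and $A_m$ is the normal subgroup generated by $a$. $T_n(\mathbb Z[1/m])$ is the group of invertible upper triangular $n\times n$ matrices over $\mathbb Z[1/m]$, $U_n(\mathbb Z[1/m])$ its subgroup of matrices with all diagonal entries $1$. A special representation is an injective homomorphism $\rho:BS(1,m)\to T_n(\mathbb Z[1/m])$ with $\rho(A_m)\subseteq U_n(\mathbb Z[1/m])$. For a subgroup $G\le GL_n(\mathbb Z[1/m])$ and an integer $N>0$ coprime to $m$, the congruence subgroup $G(N)$ is $G\cap\ker\big(GL_n(\mathbb Z[1/m])\to GL_n(\mathbb Z/N\mathbb Z)\big)$ (reduction modulo $N$, using $\mathbb Z[1/m]/N\mathbb Z[1/m]\cong\mathbb Z/N\mathbb Z$). $G$ has the congruence subgroup property (CSP) if every finite-index subgroup of $G$ contains $G(N)$ for some $N>0$ coprime to $m$. *)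

theory Defs
  imports "Jordan_Normal_Form.Matrix" "HOL-Algebra.Generated_Groups" "HOL-Algebra.Coset"
begin

definition Zinv :: "nat \<Rightarrow> rat set" where
  "Zinv m = {of_int a / of_nat m ^ k | a k. True}"

definition over_Zinv :: "nat \<Rightarrow> rat mat \<Rightarrow> bool" where
  "over_Zinv m A = (\<forall>i<dim_row A. \<forall>j<dim_col A. A $$ (i,j) \<in> Zinv m)"

definition GL_Zinv :: "nat \<Rightarrow> nat \<Rightarrow> rat mat set" where
  "GL_Zinv m n = {A \<in> carrier_mat n n. over_Zinv m A \<and>
      (\<exists>B \<in> carrier_mat n n. over_Zinv m B \<and> A * B = 1\<^sub>m n \<and> B * A = 1\<^sub>m n)}"

definition GL_group :: "nat \<Rightarrow> nat \<Rightarrow> rat mat monoid" where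
  "GL_group m n = \<lparr>carrier = GL_Zinv m n, mult = (*), one = 1\<^sub>m n\<rparr>"

definition T_Zinv :: "nat \<Rightarrow> nat \<Rightarrow> rat mat set" where
  "T_Zinv m n = {A \<in> GL_Zinv m n. upper_triangular A}"

definition U_Zinv :: "nat \<Rightarrow> nat \<Rightarrow> rat mat set" where
  "U_Zinv m n = {A \<in> T_Zinv m n. \<forall>i<n. A $$ (i,i) = 1}"

definition cong_subgroup :: "nat \<Rightarrow> nat \<Rightarrow> rat mat set \<Rightarrow> nat \<Rightarrow> rat mat set" where
  "cong_subgroup m n G N = {A \<in> G. \<forall>i<n. \<forall>j<n.
      \<exists>z \<in> Zinv m. A $$ (i,j) - (1\<^sub>m n :: rat mat) $$ (i,j) = of_nat N * z}"

definition has_CSP :: "nat \<Rightarrow> nat \<Rightarrow> rat mat set \<Rightarrow> bool" where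
  "has_CSP m n G = (\<forall>H. subgroup H ((GL_group m n)\<lparr>carrier := G\<rparr>)
        \<and> finite {H #>\<^bsub>GL_group m n\<^esub> g | g. g \<in> G}
      \<longrightarrow> (\<exists>N>0. coprime N m \<and> cong_subgroup m n G N \<subseteq> H))"

(* Concrete model of BS(1,m) = <a,t | t a t^-1 = a^m>: the affine group of Q
   generated by a: x \<mapsto> x+1 and t: x \<mapsto> m x, i.e. the maps
   x \<mapsto> m^k x + b with k \<in> Z, b \<in> Z[1/m]; the pair (k,b) encodes this map
   and multiplication is composition. *)
definition BS_mult :: "nat \<Rightarrow> int \<times> rat \<Rightarrow> int \<times> rat \<Rightarrow> int \<times> rat" where
  "BS_mult m x y = (fst x + fst y, of_nat m powi fst x * snd y + snd x)"

definition BS :: "nat \<Rightarrow> (int \<times> rat) monoid" where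
  "BS m = \<lparr>carrier = UNIV \<times> Zinv m, mult = BS_mult m, one = (0, 0)\<rparr>"

definition BS_a :: "int \<times> rat" where "BS_a = (0, 1)"
definition BS_t :: "int \<times> rat" where "BS_t = (1, 0)"

definition BS_A :: "nat \<Rightarrow> (int \<times> rat) set" where
  "BS_A m = generate (BS m) {g \<otimes>\<^bsub>BS m\<^esub> BS_a \<otimes>\<^bsub>BS m\<^esub> inv\<^bsub>BS m\<^esub> g | g. g \<in> carrier (BS m)}"

(* sanity check of the defining relation t a t^{-1} = a^m *)
lemma BS_relation:
  assumes "m \<ge> 1"
  shows "BS_mult m (BS_mult m BS_t BS_a) (-1, 0) = ((BS_mult m BS_a) ^^ m) (0,0)"
proof -
  have "((BS_mult m BS_a) ^^ k) (0,0) = (0, of_nat k)" for k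
    by (induction k) (auto simp: BS_mult_def BS_a_def)
  then show ?thesis using assms by (simp add: BS_mult_def BS_a_def BS_t_def)
qed

definition special_rep :: "nat \<Rightarrow> nat \<Rightarrow> (int \<times> rat \<Rightarrow> rat mat) \<Rightarrow> bool" where
  "special_rep m n \<rho> = (\<rho> \<in> hom (BS m) (GL_group m n) \<and> inj_on \<rho> (carrier (BS m))
      \<and> \<rho> ` carrier (BS m) \<subseteq> T_Zinv m n \<and> \<rho> ` BS_A m \<subseteq> U_Zinv m n)"

end

theory Submission
  imports Defs
begin


lemma mult_entry:
  assumes "A \<in> carrier_mat n n" "B \<in> carrier_mat n n" "i < n" "j < n"
  shows "(A*B) $$ (i,j) = (\<Sum>l<n. A$$(i,l) * B$$(l,j))"
  using assms by (auto simp: scalar_prod_def lessThan_atLeast0 intro!: sum.cong)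

lemma Zinv_int[simp]: "of_int a \<in> Zinv m"
  unfolding Zinv_def by (rule CollectI, rule exI[of _ a], rule exI[of _ 0]) simp

lemma Zinv_nat[simp]: "of_nat a \<in> Zinv m"
  using Zinv_int[of "int a" m] by simp

lemma Zinv_0[simp]: "0 \<in> Zinv m" and Zinv_1[simp]: "1 \<in> Zinv m"
  using Zinv_int[of 0 m] Zinv_int[of 1 m] by auto

lemma ZinvE: assumes "x \<in> Zinv m" obtains a k where "x = of_int a / of_nat m ^ k"
  using assms unfolding Zinv_def by auto

lemma ZinvI: "x = of_int a / of_nat m ^ k \<Longrightarrow> x \<in> Zinv m"
  unfolding Zinv_def by auto

lemma Zinv_add: assumes "m > 0" "x \<in> Zinv m" "y \<in> Zinv m" shows "x + y \<in> Zinv m"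
proof -
  obtain a k where a: "x = of_int a / of_nat m ^ k" using assms ZinvE by blast
  obtain b l where b: "y = of_int b / of_nat m ^ l" using assms ZinvE by blast
  have "x + y = of_int (a * int m ^ l + b * int m ^ k) / of_nat m ^ (k + l)"
    using assms(1) by (simp add: a b field_simps power_add)
  then show ?thesis by (rule ZinvI)
qed

lemma Zinv_mult: assumes "x \<in> Zinv m" "y \<in> Zinv m" shows "x * y \<in> Zinv m"
proof -
  obtain a k where a: "x = of_int a / of_nat m ^ k" using assms ZinvE by blast
  obtain b l where b: "y = of_int b / of_nat m ^ l" using assms ZinvE by blast
  have "x * y = of_int (a * b) / of_nat m ^ (k + l)"
    by (simp add: a b power_add)
  then show ?thesis by (rule ZinvI)
qed

lemma Zinv_uminus: assumes "x \<in> Zinv m" shows "- x \<in> Zinv m"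
proof -
  obtain a k where a: "x = of_int a / of_nat m ^ k" using assms ZinvE by blast
  have "- x = of_int (- a) / of_nat m ^ k" by (simp add: a)
  then show ?thesis by (rule ZinvI)
qed

lemma Zinv_diff: assumes "m > 0" "x \<in> Zinv m" "y \<in> Zinv m" shows "x - y \<in> Zinv m"
  using Zinv_add[OF assms(1,2) Zinv_uminus[OF assms(3)]] by simp

lemma Zinv_sum: assumes "m > 0" "\<And>i. i \<in> A \<Longrightarrow> f i \<in> Zinv m" shows "sum f A \<in> Zinv m"
  using assms(2)
proof (induction A rule: infinite_finite_induct)
  case (insert x F) then show ?case using Zinv_add[OF assms(1)] by simp
qed auto

lemma Zinv_inv_pow: "1 / of_nat m ^ k \<in> Zinv m"
  by (rule ZinvI[of _ 1]) simp

lemma Zinv_powi: assumes "m > 0" shows "of_nat m powi k \<in> Zinv m"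
proof (cases "k \<ge> 0")
  case True
  then have "of_nat m powi k = (of_int (int m ^ nat k) :: rat)"
    by (simp add: power_int_def)
  then show ?thesis using Zinv_int[of "int m ^ nat k" m] by simp
next
  case False
  then have "of_nat m powi k = 1 / (of_nat m :: rat) ^ nat (- k)"
    by (simp add: power_int_def field_simps)
  then show ?thesis using Zinv_inv_pow by simp
qed

lemma Zinv_dvd_inv: assumes "m > 0" "g dvd m" shows "1 / of_nat g \<in> Zinv m"
proof -
  obtain q where q: "m = g * q" using assms by auto
  have "g > 0" "q > 0" using assms q by auto
  have "1 / (of_nat g :: rat) = of_int (int q) / of_nat m ^ 1"
    using \<open>g > 0\<close> \<open>q > 0\<close> q by (simp add: field_simps)
  then show ?thesis by (rule ZinvI)
qed

definition MC :: "nat \<Rightarrow> nat \<Rightarrow> nat \<Rightarrow> rat mat \<Rightarrow> rat mat \<Rightarrow> bool" where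
  "MC m n N A B = (\<forall>i<n. \<forall>j<n. \<exists>z\<in>Zinv m. A$$(i,j) - B$$(i,j) = of_nat N * z)"

lemma MC_refl: "MC m n N A A"
  unfolding MC_def by (auto intro: bexI[of _ 0])

lemma MC_sym: "MC m n N A B \<Longrightarrow> MC m n N B A"
  unfolding MC_def
  by (metis (no_types, opaque_lifting) Zinv_uminus minus_diff_eq mult_minus_right)

lemma MC_trans: "m > 0 \<Longrightarrow> MC m n N A B \<Longrightarrow> MC m n N B C \<Longrightarrow> MC m n N A C"
  unfolding MC_def
proof (intro allI impI)
  fix i j assume m: "m > 0" and h: "\<forall>i<n. \<forall>j<n. \<exists>z\<in>Zinv m. A $$ (i, j) - B $$ (i, j) = of_nat N * z"
    "\<forall>i<n. \<forall>j<n. \<exists>z\<in>Zinv m. B $$ (i, j) - C $$ (i, j) = of_nat N * z" and ij: "i < n" "j < n"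
  then obtain z1 z2 where z: "z1 \<in> Zinv m" "z2 \<in> Zinv m" "A $$ (i, j) - B $$ (i, j) = of_nat N * z1"
    "B $$ (i, j) - C $$ (i, j) = of_nat N * z2" by meson
  then have "A $$ (i, j) - C $$ (i, j) = of_nat N * (z1 + z2)" by (simp add: algebra_simps)
  then show "\<exists>z\<in>Zinv m. A $$ (i, j) - C $$ (i, j) = of_nat N * z" using Zinv_add[OF m z(1,2)] by blast
qed

lemma MC_mult:
  assumes m: "m > 0" and car: "A \<in> carrier_mat n n" "A' \<in> carrier_mat n n" "B \<in> carrier_mat n n" "B' \<in> carrier_mat n n"
    and ov: "over_Zinv m A'" "over_Zinv m B"
    and h: "MC m n N A A'" "MC m n N B B'"
  shows "MC m n N (A * B) (A' * B')"
  unfolding MC_def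
proof (intro allI impI)
  fix i j assume ij: "i < n" "j < n"
  have "\<forall>l\<in>{..<n}. \<exists>w\<in>Zinv m. A$$(i,l)*B$$(l,j) - A'$$(i,l)*B'$$(l,j) = of_nat N * w"
  proof
    fix l assume "l \<in> {..<n}"
    then have l: "l < n" by simp
    obtain z1 z2 where z: "z1 \<in> Zinv m" "z2 \<in> Zinv m" "A $$ (i, l) - A' $$ (i, l) = of_nat N * z1"
      "B $$ (l, j) - B' $$ (l, j) = of_nat N * z2" using h ij l unfolding MC_def by meson
    have "A$$(i,l)*B$$(l,j) - A'$$(i,l)*B'$$(l,j) = (A $$ (i, l) - A' $$ (i, l)) * B$$(l,j) + A'$$(i,l) * (B $$ (l, j) - B' $$ (l, j))"
      by (simp add: algebra_simps)
    also have "\<dots> = of_nat N * (z1 * B$$(l,j) + A'$$(i,l) * z2)" by (simp add: z algebra_simps)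
    finally show "\<exists>w\<in>Zinv m. A$$(i,l)*B$$(l,j) - A'$$(i,l)*B'$$(l,j) = of_nat N * w"
      using ov car ij l z unfolding over_Zinv_def
      by (intro bexI[of _ "z1 * B$$(l,j) + A'$$(i,l) * z2"] Zinv_add[OF m] Zinv_mult) auto
  qed
  then obtain w where w: "\<forall>l\<in>{..<n}. w l \<in> Zinv m \<and> A$$(i,l)*B$$(l,j) - A'$$(i,l)*B'$$(l,j) = of_nat N * w l"
    by metis
  have "(A * B) $$ (i, j) - (A' * B') $$ (i, j) = (\<Sum>l<n. A$$(i,l)*B$$(l,j) - A'$$(i,l)*B'$$(l,j))"
    unfolding mult_entry[OF car(1,3) ij] mult_entry[OF car(2,4) ij] by (simp add: sum_subtractf)
  also have "\<dots> = of_nat N * (\<Sum>l<n. w l)" using w by (simp add: sum_distrib_left)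
  finally show "\<exists>z\<in>Zinv m. (A * B) $$ (i, j) - (A' * B') $$ (i, j) = of_nat N * z"
    using w Zinv_sum[OF m, of "{..<n}" w] by blast
qed



definition binv :: "nat \<Rightarrow> int \<times> rat \<Rightarrow> int \<times> rat" where
  "binv m x = (- fst x, - snd x / of_nat m powi fst x)"

locale srep =
  fixes m n :: nat and \<rho> :: "int \<times> rat \<Rightarrow> rat mat"
  assumes m2: "m \<ge> 2" and sr: "special_rep m n \<rho>"
begin

lemma m0: "m > 0" using m2 by simp
lemma mq0[simp]: "(of_nat m :: rat) \<noteq> 0" using m2 by simp

lemma carBS[simp]: "x \<in> carrier (BS m) \<longleftrightarrow> snd x \<in> Zinv m"
  by (cases x) (simp add: BS_def)

lemma multBS[simp]: "x \<otimes>\<^bsub>BS m\<^esub> y = BS_mult m x y"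
  by (simp add: BS_def)

lemma BS_mult_simp[simp]: "BS_mult m (k, b) (k', b') = (k + k', of_nat m powi k * b' + b)"
  by (simp add: BS_mult_def)

lemma BS_closed: "snd x \<in> Zinv m \<Longrightarrow> snd y \<in> Zinv m \<Longrightarrow> snd (BS_mult m x y) \<in> Zinv m"
  by (simp add: BS_mult_def Zinv_add[OF m0] Zinv_mult Zinv_powi[OF m0])

lemma binv_closed: "snd x \<in> Zinv m \<Longrightarrow> snd (binv m x) \<in> Zinv m"
proof -
  assume a: "snd x \<in> Zinv m"
  have "snd (binv m x) = - (snd x * of_nat m powi (- fst x))"
    by (simp add: binv_def power_int_minus divide_inverse)
  then show ?thesis using a by (simp add: Zinv_uminus Zinv_mult Zinv_powi[OF m0])
qed

lemma binv_r: "BS_mult m x (binv m x) = (0, 0)"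
  using m0 by (cases x) (simp add: binv_def)

lemma binv_l: "BS_mult m (binv m x) x = (0, 0)"
  by (cases x) (simp add: binv_def power_int_minus field_simps)

lemma hom: "\<rho> \<in> hom (BS m) (GL_group m n)" using sr by (simp add: special_rep_def)

lemma rho_GL: assumes "snd x \<in> Zinv m" shows "\<rho> x \<in> GL_Zinv m n"
proof -
  have "\<rho> \<in> carrier (BS m) \<rightarrow> carrier (GL_group m n)" using hom unfolding hom_def by blast
  moreover have "x \<in> carrier (BS m)" using assms by simp
  ultimately have "\<rho> x \<in> carrier (GL_group m n)" by (rule funcset_mem)
  then show ?thesis by (simp add: GL_group_def)
qed

lemma rho_car_ov: assumes "snd x \<in> Zinv m" shows "\<rho> x \<in> carrier_mat n n \<and> over_Zinv m (\<rho> x)"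
proof -
  have "\<rho> x \<in> GL_Zinv m n" by (rule rho_GL[OF assms])
  then show ?thesis unfolding GL_Zinv_def by (rule CollectE) (rule conjI, erule conjunct1, erule conjunct1[OF conjunct2])
qed

lemma rho_car[simp]: "snd x \<in> Zinv m \<Longrightarrow> \<rho> x \<in> carrier_mat n n"
  using rho_car_ov by (rule conjunct1)

lemma rho_ov: "snd x \<in> Zinv m \<Longrightarrow> over_Zinv m (\<rho> x)"
  using rho_car_ov by (rule conjunct2)

lemma rho_entry: assumes "snd x \<in> Zinv m" "i < n" "j < n" shows "\<rho> x $$ (i,j) \<in> Zinv m"
proof -
  have "dim_row (\<rho> x) = n" "dim_col (\<rho> x) = n" using rho_car[OF assms(1)] by auto
  then show ?thesis using rho_ov[OF assms(1)] assms(2,3) unfolding over_Zinv_def by metis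
qed

lemma rho_T: "snd x \<in> Zinv m \<Longrightarrow> \<rho> x \<in> T_Zinv m n"
  using sr unfolding special_rep_def by (cases x) (auto simp: BS_def)

lemma rho_ut: "snd x \<in> Zinv m \<Longrightarrow> i < n \<Longrightarrow> j < i \<Longrightarrow> \<rho> x $$ (i,j) = 0"
  using rho_T[of x] rho_car[of x] unfolding T_Zinv_def upper_triangular_def carrier_mat_def by auto

lemma rho_mult: assumes "snd x \<in> Zinv m" "snd y \<in> Zinv m" shows "\<rho> (BS_mult m x y) = \<rho> x * \<rho> y"
proof -
  have "\<forall>x\<in>carrier (BS m). \<forall>y\<in>carrier (BS m). \<rho> (x \<otimes>\<^bsub>BS m\<^esub> y) = \<rho> x \<otimes>\<^bsub>GL_group m n\<^esub> \<rho> y"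
    using hom unfolding hom_def by blast
  moreover have "x \<in> carrier (BS m)" "y \<in> carrier (BS m)" using assms by simp_all
  ultimately have "\<rho> (x \<otimes>\<^bsub>BS m\<^esub> y) = \<rho> x \<otimes>\<^bsub>GL_group m n\<^esub> \<rho> y" by blast
  then show ?thesis by (simp add: GL_group_def)
qed

lemma rho_one: "\<rho> (0, 0) = 1\<^sub>m n"
proof -
  let ?A = "\<rho> (0,0)"
  have A: "?A \<in> carrier_mat n n" by simp
  have sq: "?A * ?A = ?A" using rho_mult[of "(0,0)" "(0,0)"] by simp
  obtain B where B: "B \<in> carrier_mat n n" "?A * B = 1\<^sub>m n" using rho_GL[of "(0,0)"] by (auto simp: GL_Zinv_def)
  have "?A = ?A * (?A * B)" using B A by (simp add: right_mult_one_mat[OF A])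
  also have "\<dots> = (?A * ?A) * B" by (rule assoc_mult_mat[symmetric, OF A A B(1)])
  also have "\<dots> = 1\<^sub>m n" using sq B by simp
  finally show ?thesis .
qed

lemma rho_inv_r: "snd x \<in> Zinv m \<Longrightarrow> \<rho> x * \<rho> (binv m x) = 1\<^sub>m n"
  using rho_mult[of x "binv m x"] binv_closed binv_r rho_one by simp

lemma rho_inv_l: "snd x \<in> Zinv m \<Longrightarrow> \<rho> (binv m x) * \<rho> x = 1\<^sub>m n"
  using rho_mult[of "binv m x" x] binv_closed binv_l rho_one by simp

lemma aux_solve: "(p::rat) \<noteq> 0 \<Longrightarrow> b + c * p = 0 \<Longrightarrow> c = -(b/p)"
  by (simp add: field_simps)

lemma inv_BS: "snd x \<in> Zinv m \<Longrightarrow> inv\<^bsub>BS m\<^esub> x = binv m x"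
  unfolding m_inv_def
proof (rule the_equality)
  assume "snd x \<in> Zinv m"
  then show "binv m x \<in> carrier (BS m) \<and> x \<otimes>\<^bsub>BS m\<^esub> binv m x = \<one>\<^bsub>BS m\<^esub> \<and> binv m x \<otimes>\<^bsub>BS m\<^esub> x = \<one>\<^bsub>BS m\<^esub>"
    using binv_closed binv_r binv_l by (simp add: BS_def mem_Times_iff)
next
  fix y assume "y \<in> carrier (BS m) \<and> x \<otimes>\<^bsub>BS m\<^esub> y = \<one>\<^bsub>BS m\<^esub> \<and> y \<otimes>\<^bsub>BS m\<^esub> x = \<one>\<^bsub>BS m\<^esub>"
  then have e: "BS_mult m x y = (0,0)" by (simp add: BS_def)
  obtain a b where x: "x = (a,b)" by fastforce
  obtain c d where y: "y = (c,d)" by fastforce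
  have p: "(of_nat m :: rat) powi a \<noteq> 0" using m0 by (simp add: power_int_not_zero)
  from e have e1: "a + c = 0" and e2: "of_nat m powi a * d + b = 0" by (simp_all add: x y)
  from e2 have "b + d * of_nat m powi a = 0" by (simp add: mult.commute add.commute)
  then have "d = - (b / of_nat m powi a)" by (rule aux_solve[OF p])
  then show "y = binv m x" using e1 by (simp add: x y binv_def)
qed

lemma conj_t: "BS_mult m (BS_mult m (k, 0) (0, y)) (-k, 0) = (0, of_nat m powi k * y)"
  by simp

lemma A_gen_mem: "(0, of_nat m powi k) \<in> {g \<otimes>\<^bsub>BS m\<^esub> BS_a \<otimes>\<^bsub>BS m\<^esub> inv\<^bsub>BS m\<^esub> g | g. g \<in> carrier (BS m)}"
proof -
  have i: "inv\<^bsub>BS m\<^esub> (k,0) = (-k, 0)" by (subst inv_BS) (simp_all add: binv_def)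
  have "(k, 0) \<otimes>\<^bsub>BS m\<^esub> BS_a \<otimes>\<^bsub>BS m\<^esub> inv\<^bsub>BS m\<^esub> (k,0) = (0, of_nat m powi k)"
    unfolding i by (simp add: BS_a_def)
  then show ?thesis by (intro CollectI exI[of _ "(k,0)"]) simp
qed

lemma A_gen: "(0, of_nat m powi k) \<in> BS_A m"
  unfolding BS_A_def by (rule generate.incl[OF A_gen_mem])

lemma A_gen_neg: "(0, - (of_nat m powi k)) \<in> BS_A m"
proof -
  have z: "of_nat m powi k \<in> Zinv m" by (rule Zinv_powi[OF m0])
  have "inv\<^bsub>BS m\<^esub> (0, of_nat m powi k) = binv m (0, of_nat m powi k)"
    by (rule inv_BS) (simp add: z)
  also have "\<dots> = (0, - (of_nat m powi k))" by (simp add: binv_def)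
  finally have e: "(0, - (of_nat m powi k)) = inv\<^bsub>BS m\<^esub> (0, of_nat m powi k)" by simp
  show ?thesis unfolding e BS_A_def by (rule generate.inv[OF A_gen_mem])
qed

lemma A_add: "(0, x) \<in> BS_A m \<Longrightarrow> (0, y) \<in> BS_A m \<Longrightarrow> (0, x + y) \<in> BS_A m"
  unfolding BS_A_def using generate.eng[of "(0,x)" "BS m" _ "(0,y)"] by (simp add: add.commute)

lemma A_nat: "(0, of_nat c * (of_nat m powi k)) \<in> BS_A m" "(0, - (of_nat c * (of_nat m powi k))) \<in> BS_A m"
proof (induction c)
  case 0
  have "(0,0) \<in> BS_A m" unfolding BS_A_def using generate.one[of "BS m"] by (simp add: BS_def)
  then show "(0, of_nat 0 * (of_nat m powi k)) \<in> BS_A m" "(0, - (of_nat 0 * (of_nat m powi k))) \<in> BS_A m" by auto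
next
  case (Suc c)
  show "(0, of_nat (Suc c) * (of_nat m powi k)) \<in> BS_A m"
    using A_add[OF Suc(1) A_gen[of k]] by (simp add: distrib_right add.commute)
  show "(0, - (of_nat (Suc c) * (of_nat m powi k))) \<in> BS_A m"
    using A_add[OF Suc(2) A_gen_neg[of k]] by (simp add: distrib_right add.commute)
qed

lemma A_all: "b \<in> Zinv m \<Longrightarrow> (0, b) \<in> BS_A m"
proof -
  assume "b \<in> Zinv m"
  then obtain a k where b: "b = of_int a / of_nat m ^ k" by (rule ZinvE)
  have e: "b = of_int a * (of_nat m powi (- int k))"
    by (simp add: b power_int_minus divide_inverse)
  show ?thesis
  proof (cases "a \<ge> 0")
    case True
    then have "b = of_nat (nat a) * (of_nat m powi (- int k))" using e by simp
    then show ?thesis using A_nat(1)[of "nat a" "- int k"] by (simp only:)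
  next
    case False
    then have "b = - (of_nat (nat (- a)) * (of_nat m powi (- int k)))" using e by simp
    then show ?thesis using A_nat(2)[of "nat (- a)" "- int k"] by (simp only:)
  qed
qed

lemma rho_U: "b \<in> Zinv m \<Longrightarrow> \<rho> (0, b) \<in> U_Zinv m n"
proof -
  assume b: "b \<in> Zinv m"
  have "\<rho> ` BS_A m \<subseteq> U_Zinv m n" using sr by (simp add: special_rep_def)
  then show ?thesis using A_all[OF b] by (meson image_subset_iff)
qed

lemma rho_U_diag: "b \<in> Zinv m \<Longrightarrow> i < n \<Longrightarrow> \<rho> (0, b) $$ (i,i) = 1"
proof -
  assume "b \<in> Zinv m" "i < n"
  then show ?thesis using rho_U[of b] unfolding U_Zinv_def by blast
qed

end



locale srepH = srep +
  fixes H :: "rat mat set"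
  assumes sub: "subgroup H ((GL_group m n)\<lparr>carrier := \<rho> ` carrier (BS m)\<rparr>)"
    and fin: "finite {H #>\<^bsub>GL_group m n\<^esub> g | g. g \<in> \<rho> ` carrier (BS m)}"
begin

abbreviation "GG \<equiv> (GL_group m n)\<lparr>carrier := \<rho> ` carrier (BS m)\<rparr>"

lemma H_sub: "h \<in> H \<Longrightarrow> \<exists>g. snd g \<in> Zinv m \<and> h = \<rho> g"
proof -
  assume "h \<in> H"
  then have "h \<in> \<rho> ` carrier (BS m)" using subgroup.subset[OF sub] by auto
  then obtain g where "g \<in> carrier (BS m)" "h = \<rho> g" by blast
  then show ?thesis using carBS by blast
qed

lemma H_car: "h \<in> H \<Longrightarrow> h \<in> carrier_mat n n"
  using H_sub rho_car by blast

lemma GG_mult: "x \<otimes>\<^bsub>GG\<^esub> y = x * y"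
  by (simp add: GL_group_def)

lemma GG_one: "\<one>\<^bsub>GG\<^esub> = 1\<^sub>m n"
  by (simp add: GL_group_def)

lemma P_mult: "snd x \<in> Zinv m \<Longrightarrow> snd y \<in> Zinv m \<Longrightarrow> \<rho> x \<in> H \<Longrightarrow> \<rho> y \<in> H \<Longrightarrow> \<rho> (BS_mult m x y) \<in> H"
  using subgroup.m_closed[OF sub, of "\<rho> x" "\<rho> y"] rho_mult[of x y] by (simp only: GG_mult)

lemma P_one: "\<rho> (0,0) \<in> H"
  using subgroup.one_closed[OF sub] by (simp only: GG_one rho_one)

lemma P_inv: assumes x: "snd x \<in> Zinv m" and h: "\<rho> x \<in> H" shows "\<rho> (binv m x) \<in> H"
proof -
  have bx: "snd (binv m x) \<in> Zinv m" by (rule binv_closed[OF x])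
  have "inv\<^bsub>GG\<^esub> (\<rho> x) = \<rho> (binv m x)"
    unfolding m_inv_def
  proof (rule the_equality)
    have "binv m x \<in> carrier (BS m)" using bx by simp
    then show "\<rho> (binv m x) \<in> carrier GG \<and> \<rho> x \<otimes>\<^bsub>GG\<^esub> \<rho> (binv m x) = \<one>\<^bsub>GG\<^esub> \<and> \<rho> (binv m x) \<otimes>\<^bsub>GG\<^esub> \<rho> x = \<one>\<^bsub>GG\<^esub>"
      unfolding GG_mult GG_one using rho_inv_r[OF x] rho_inv_l[OF x] by simp
  next
    fix y assume y: "y \<in> carrier GG \<and> \<rho> x \<otimes>\<^bsub>GG\<^esub> y = \<one>\<^bsub>GG\<^esub> \<and> y \<otimes>\<^bsub>GG\<^esub> \<rho> x = \<one>\<^bsub>GG\<^esub>"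
    then have y1: "\<rho> x * y = 1\<^sub>m n" unfolding GG_mult GG_one by blast
    from y have "y \<in> \<rho> ` carrier (BS m)" by simp
    then have yc: "y \<in> carrier_mat n n" using rho_car carBS by blast
    have "y = 1\<^sub>m n * y" using yc by simp
    also have "\<dots> = (\<rho> (binv m x) * \<rho> x) * y" using rho_inv_l[OF x] by simp
    also have "\<dots> = \<rho> (binv m x) * (\<rho> x * y)" using rho_car[OF bx] rho_car[OF x] yc by (rule assoc_mult_mat)
    also have "\<dots> = \<rho> (binv m x)" using y1 rho_car[OF bx] by simp
    finally show "y = \<rho> (binv m x)" .
  qed
  then show ?thesis using subgroup.m_inv_closed[OF sub h] by simp
qed

lemma coset_eq:
  assumes x: "snd x \<in> Zinv m" and y: "snd y \<in> Zinv m"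
    and e: "H #>\<^bsub>GL_group m n\<^esub> \<rho> x = H #>\<^bsub>GL_group m n\<^esub> \<rho> y"
  shows "\<rho> (BS_mult m y (binv m x)) \<in> H"
proof -
  have "\<rho> y \<in> H #>\<^bsub>GL_group m n\<^esub> \<rho> y"
    unfolding r_coset_def using P_one rho_one rho_car[OF y]
    by (intro UN_I[of "1\<^sub>m n"]) (auto simp: GL_group_def)
  then have "\<rho> y \<in> H #>\<^bsub>GL_group m n\<^esub> \<rho> x" using e by simp
  then obtain h where h: "h \<in> H" "\<rho> y = h * \<rho> x" unfolding r_coset_def by (auto simp: GL_group_def)
  have hc: "h \<in> carrier_mat n n" by (rule H_car[OF h(1)])
  have bx: "snd (binv m x) \<in> Zinv m" by (rule binv_closed[OF x])
  have "\<rho> (BS_mult m y (binv m x)) = (h * \<rho> x) * \<rho> (binv m x)" using rho_mult[OF y bx] h(2) by simp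
  also have "\<dots> = h * (\<rho> x * \<rho> (binv m x))" using hc rho_car[OF x] rho_car[OF bx] by (rule assoc_mult_mat)
  also have "\<dots> = h" using rho_inv_r[OF x] hc by simp
  finally show ?thesis using h(1) by simp
qed

lemma pigeon:
  fixes F :: "nat \<Rightarrow> int \<times> rat"
  assumes F: "\<And>i. snd (F i) \<in> Zinv m"
    and Fd: "\<And>i i'. i < i' \<Longrightarrow> BS_mult m (F i') (binv m (F i)) = F (i' - i)"
  shows "\<exists>j>0. \<rho> (F j) \<in> H"
proof -
  let ?C = "{H #>\<^bsub>GL_group m n\<^esub> g | g. g \<in> \<rho> ` carrier (BS m)}"
  define cos where "cos i = H #>\<^bsub>GL_group m n\<^esub> \<rho> (F i)" for i
  let ?d = "card ?C"
  have sub': "cos ` {0..?d} \<subseteq> ?C" unfolding cos_def using F by auto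
  have "card (cos ` {0..?d}) \<le> ?d" by (rule card_mono[OF fin sub'])
  then have "card (cos ` {0..?d}) < card {0..?d}" by simp
  then have "\<not> inj_on cos {0..?d}" using pigeonhole by blast
  then obtain i i' where ii: "i \<noteq> i'" "cos i = cos i'" unfolding inj_on_def by blast
  have key: "\<exists>j>0. \<rho> (F j) \<in> H" if "i < i'" "cos i = cos i'" for i i'
  proof -
    have "\<rho> (BS_mult m (F i') (binv m (F i))) \<in> H"
      by (rule coset_eq[OF F F]) (use that in \<open>simp add: cos_def\<close>)
    then show ?thesis using Fd[OF that(1)] that(1) by (intro exI[of _ "i' - i"]) simp
  qed
  show ?thesis
  proof (cases "i < i'")
    case True then show ?thesis using key ii by blast
  next
    case False then have "i' < i" using ii by simp
    then show ?thesis using key ii by metis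
  qed
qed

lemma t_pow: "\<exists>j>0. \<rho> (int j, 0) \<in> H"
  using pigeon[of "\<lambda>i. (int i, 0)"] by (simp add: binv_def of_nat_diff)

lemma a_pow: "\<exists>c>0. \<rho> (0, of_nat c) \<in> H"
  using pigeon[of "\<lambda>i. (0, of_nat i)"] by (simp add: binv_def of_nat_diff)

end



context srepH begin

lemma tpow_nat: assumes "\<rho> (int j, 0) \<in> H" shows "\<rho> (int j * int l, 0) \<in> H"
proof (induction l)
  case 0 then show ?case using P_one by simp
next
  case (Suc l)
  have "BS_mult m (int j * int l, 0) (int j, 0) = (int j * int (Suc l), 0)" by (simp add: algebra_simps)
  then show ?case using P_mult[of "(int j * int l, 0)" "(int j, 0)"] Suc assms by simp
qed

lemma tpow_all: assumes "\<rho> (int j, 0) \<in> H" shows "\<rho> (int j * l, 0) \<in> H"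
proof (cases "l \<ge> 0")
  case True
  then show ?thesis using tpow_nat[OF assms, of "nat l"] by simp
next
  case False
  have "\<rho> (binv m (int j * int (nat (- l)), 0)) \<in> H"
    using P_inv[of "(int j * int (nat (- l)), 0)"] tpow_nat[OF assms, of "nat (- l)"] by simp
  moreover have "binv m (int j * int (nat (- l)), 0) = (int j * l, 0)" using False by (simp add: binv_def)
  ultimately show ?thesis by simp
qed

lemma sndZ: "snd (k, of_int t) \<in> Zinv m" by simp

lemma apow_nat: assumes "\<rho> (0, of_int c) \<in> H" shows "\<rho> (0, of_int (c * int q)) \<in> H"
proof (induction q)
  case 0 then show ?case using P_one by simp
next
  case (Suc q)
  have "BS_mult m (0, of_int (c * int q)) (0, of_int c) = (0, of_int (c * int (Suc q)))" by (simp add: algebra_simps)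
  moreover have "\<rho> (BS_mult m (0, of_int (c * int q)) (0, of_int c)) \<in> H"
    by (rule P_mult[OF sndZ sndZ Suc assms])
  ultimately show ?case by simp
qed

lemma apow_all: assumes "\<rho> (0, of_int c) \<in> H" shows "\<rho> (0, of_int (c * q)) \<in> H"
proof (cases "q \<ge> 0")
  case True
  then show ?thesis using apow_nat[OF assms, of "nat q"] by simp
next
  case False
  have "\<rho> (binv m (0, of_int (c * int (nat (- q))))) \<in> H"
    by (rule P_inv[OF sndZ apow_nat[OF assms]])
  moreover have "binv m (0, of_int (c * int (nat (- q)))) = (0, of_int (c * q))" using False by (simp add: binv_def)
  ultimately show ?thesis by simp
qed

lemma conjH: assumes "\<rho> (k, 0) \<in> H" "\<rho> (k', 0) \<in> H" "k + k' = 0" "y \<in> Zinv m" "\<rho> (0, y) \<in> H"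
  shows "\<rho> (0, of_nat m powi k * y) \<in> H"
proof -
  have k': "k' = - k" using assms(3) by simp
  have "\<rho> (BS_mult m (k, 0) (0, y)) \<in> H" using P_mult[of "(k,0)" "(0,y)"] assms by simp
  moreover have "snd (BS_mult m (k, 0) (0, y)) \<in> Zinv m" using BS_closed[of "(k,0)" "(0,y)"] assms by simp
  ultimately have "\<rho> (BS_mult m (BS_mult m (k, 0) (0, y)) (-k, 0)) \<in> H"
    using P_mult[of "BS_mult m (k, 0) (0, y)" "(-k,0)"] assms k' by simp
  then show ?thesis by (simp only: conj_t)
qed

lemma H_main: "\<exists>j>0. \<exists>N>0. coprime N m \<and>
   (\<forall>x. snd x \<in> Zinv m \<longrightarrow> int j dvd fst x \<longrightarrow> (\<exists>z\<in>Zinv m. snd x = of_nat N * z) \<longrightarrow> \<rho> x \<in> H)"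
proof -
  obtain j where j: "j > 0" "\<rho> (int j, 0) \<in> H" using t_pow by blast
  have tj: "\<rho> (int j * l, 0) \<in> H" for l using tpow_all[OF j(2)] .
  define N where "N = (LEAST c. 0 < c \<and> \<rho> (0, of_nat c) \<in> H)"
  have ex: "\<exists>c. 0 < c \<and> \<rho> (0, of_nat c) \<in> H" using a_pow by blast
  have N: "0 < N" "\<rho> (0, of_nat N) \<in> H" using LeastI_ex[OF ex] unfolding N_def by auto
  have NI: "\<rho> (0, of_int (int N * q)) \<in> H" for q using apow_all[of "int N" q] N(2) by simp
  have cop: "coprime N m"
  proof (rule ccontr)
    assume nc: "\<not> coprime N m"
    define g where "g = gcd N m"
    have g1: "g \<noteq> 1" using nc unfolding g_def by (simp add: coprime_iff_gcd_eq_1)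
    have gp: "g > 0" using N(1) unfolding g_def by simp
    have gN: "g dvd N" and gm: "g dvd m" unfolding g_def by simp_all
    define N' where "N' = N div g"
    have NN': "N = N' * g" using gN unfolding N'_def by simp
    have N'p: "N' > 0" using N(1) NN' by (cases "N' = 0") auto
    have g2: "g \<ge> 2" using gp g1 by linarith
    have "N' * 2 \<le> N' * g" using g2 by (rule mult_le_mono2)
    then have N'l: "N' < N" using NN' N'p by linarith
    have gmj: "g dvd m ^ j" using dvd_trans[OF gm dvd_power[of j m]] j(1) by simp
    define q where "q = m ^ j div g"
    have mq: "m ^ j = q * g" using gmj unfolding q_def by simp
    have "\<rho> (0, of_int (int N * int q)) \<in> H" by (rule NI)
    moreover have "(of_int (int N * int q) :: rat) = of_nat N' * of_nat m ^ j"
    proof -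
      have "int N * int q = int N' * int (m ^ j)" using NN' mq by (simp add: algebra_simps)
      then show ?thesis by (metis of_int_of_nat_eq of_nat_mult of_nat_power)
    qed
    ultimately have h1: "\<rho> (0, of_nat N' * of_nat m ^ j) \<in> H" by simp
    have t1: "\<rho> (int j, 0) \<in> H" "\<rho> (- int j, 0) \<in> H" using tj[of 1] tj[of "-1"] by simp_all
    have yZ: "of_nat N' * of_nat m ^ j \<in> Zinv m" using Zinv_nat[of "N' * m ^ j" m] by simp
    have "\<rho> (0, of_nat m powi (- int j) * (of_nat N' * of_nat m ^ j)) \<in> H"
      by (rule conjH[OF t1(2) t1(1) _ yZ h1]) simp
    moreover have "(of_nat m powi (- int j) * (of_nat N' * of_nat m ^ j) :: rat) = of_nat N'"
      using m0 by (simp add: power_int_minus power_int_of_nat field_simps)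
    ultimately have "\<rho> (0, of_nat N') \<in> H" by simp
    then have "N \<le> N'" unfolding N_def using N'p by (intro Least_le) simp
    then show False using N'l by simp
  qed
  have main: "\<rho> x \<in> H" if x: "snd x \<in> Zinv m" "int j dvd fst x" "\<exists>z\<in>Zinv m. snd x = of_nat N * z" for x
  proof -
    obtain z where z: "z \<in> Zinv m" "snd x = of_nat N * z" using x(3) by blast
    obtain c e where ce: "z = of_int c / of_nat m ^ e" using z(1) by (rule ZinvE)
    let ?w = "of_int (int N * (c * int m ^ ((j - 1) * e))) :: rat"
    have wH: "\<rho> (0, ?w) \<in> H" by (rule NI)
    have t2: "\<rho> (- (int j * int e), 0) \<in> H" "\<rho> (int j * int e, 0) \<in> H" using tj[of "- int e"] tj[of "int e"] by simp_all
    have "\<rho> (0, of_nat m powi (- (int j * int e)) * ?w) \<in> H"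
      by (rule conjH[OF t2(1) t2(2) _ Zinv_int wH]) simp
    moreover have "of_nat m powi (- (int j * int e)) * ?w = snd x"
    proof -
      have je: "j * e = (j - 1) * e + e" using j(1) by (cases j) auto
      have p: "(of_nat m :: rat) powi (- (int j * int e)) = 1 / (of_nat m ^ ((j - 1) * e) * of_nat m ^ e)"
      proof -
        have "(of_nat m :: rat) powi (- (int j * int e)) = 1 / of_nat m ^ (j * e)"
          by (metis of_nat_mult power_int_minus_divide power_int_of_nat)
        also have "\<dots> = 1 / (of_nat m ^ ((j - 1) * e) * of_nat m ^ e)" by (subst je) (simp only: power_add)
        finally show ?thesis .
      qed
      show ?thesis unfolding p z(2) ce by (simp add: field_simps)
    qed
    ultimately have b: "\<rho> (0, snd x) \<in> H" by simp
    obtain l where l: "fst x = int j * l" using x(2) by blast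
    have "\<rho> (BS_mult m (0, snd x) (fst x, 0)) \<in> H"
      using P_mult[of "(0, snd x)" "(fst x, 0)"] b tj[of l] l x(1) by simp
    moreover have "BS_mult m (0, snd x) (fst x, 0) = x" by (cases x) simp
    ultimately show ?thesis by simp
  qed
  show ?thesis using j(1) N(1) cop main by blast
qed

end



lemma sum_two: assumes "finite A" "a \<in> A" "b \<in> A" "a \<noteq> b" "\<And>l. l \<in> A \<Longrightarrow> l \<noteq> a \<Longrightarrow> l \<noteq> b \<Longrightarrow> f l = 0"
  shows "sum f A = f a + f b"
proof -
  have "sum f A = sum f {a, b}"
    by (rule sum.mono_neutral_right) (use assms in auto)
  then show ?thesis using assms(4) by simp
qed

lemma sum_one: assumes "finite A" "a \<in> A" "\<And>l. l \<in> A \<Longrightarrow> l \<noteq> a \<Longrightarrow> f l = 0"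
  shows "sum f A = f a"
proof -
  have "sum f A = sum f {a}"
    by (rule sum.mono_neutral_right) (use assms in auto)
  then show ?thesis by simp
qed

lemma entry_two:
  assumes "A \<in> carrier_mat n n" "B \<in> carrier_mat n n" "i < n" "k < n" "i \<noteq> k"
    "\<And>l. l < n \<Longrightarrow> l \<noteq> i \<Longrightarrow> l \<noteq> k \<Longrightarrow> A$$(i,l) * B$$(l,k) = 0"
  shows "(A*B)$$(i,k) = A$$(i,i) * B$$(i,k) + A$$(i,k) * B$$(k,k)"
  unfolding mult_entry[OF assms(1-4)] by (rule sum_two) (use assms in auto)

lemma entry_one:
  assumes "A \<in> carrier_mat n n" "B \<in> carrier_mat n n" "i < n"
    "\<And>l. l < n \<Longrightarrow> l \<noteq> i \<Longrightarrow> A$$(i,l) * B$$(l,i) = 0"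
  shows "(A*B)$$(i,i) = A$$(i,i) * B$$(i,i)"
  unfolding mult_entry[OF assms(1,2,3,3)] by (rule sum_one) (use assms in auto)

context srep begin

lemma diag_mult: assumes "snd x \<in> Zinv m" "snd y \<in> Zinv m" "i < n"
  shows "\<rho> (BS_mult m x y) $$ (i,i) = \<rho> x $$ (i,i) * \<rho> y $$ (i,i)"
proof -
  have "(\<rho> x * \<rho> y) $$ (i,i) = \<rho> x $$ (i,i) * \<rho> y $$ (i,i)"
  proof (rule entry_one[OF rho_car[OF assms(1)] rho_car[OF assms(2)] assms(3)])
    fix l assume l: "l < n" "l \<noteq> i"
    show "\<rho> x $$ (i, l) * \<rho> y $$ (l, i) = 0"
    proof (cases "l < i")
      case True then show ?thesis using rho_ut[OF assms(1) assms(3)] by simp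
    next
      case False then have "i < l" using l by simp
      then show ?thesis using rho_ut[OF assms(2) l(1)] by simp
    qed
  qed
  then show ?thesis using rho_mult[OF assms(1,2)] by simp
qed

lemma diag_k0: assumes "b \<in> Zinv m" "i < n" shows "\<rho> (k, b) $$ (i,i) = \<rho> (k, 0) $$ (i,i)"
proof -
  have "\<rho> (BS_mult m (0, b) (k, 0)) $$ (i,i) = \<rho> (0, b) $$ (i,i) * \<rho> (k, 0) $$ (i,i)"
    by (rule diag_mult) (use assms in simp_all)
  then show ?thesis using rho_U_diag[OF assms] by simp
qed

lemma diag_pow: assumes "i < n" shows "\<rho> (k, 0) $$ (i,i) = (\<rho> (1, 0) $$ (i,i)) powi k"
proof -
  let ?d = "\<lambda>k. \<rho> (k, 0) $$ (i,i)"
  have step: "?d (k + 1) = ?d k * ?d 1" for k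
    using diag_mult[of "(k,0)" "(1,0)" i] assms by simp
  have "?d 1 * ?d (-1) = ?d 0" using diag_mult[of "(1,0)" "(-1,0)" i] assms by simp
  also have "\<dots> = 1" using rho_one assms by simp
  finally have nz: "?d 1 \<noteq> 0" by auto
  show ?thesis
  proof (induction k rule: int_induct[where k = 0])
    case base then show ?case using rho_one assms by simp
  next
    case (step1 k) then show ?case using step[of k] by (simp add: power_int_add nz)
  next
    case (step2 k)
    have "?d k = ?d (k - 1) * ?d 1" using step[of "k - 1"] by simp
    then have "?d (k - 1) = ?d k / ?d 1" using nz by simp
    then show ?case using step2 nz by (simp add: power_int_diff)
  qed
qed

lemma diag_nz: "i < n \<Longrightarrow> \<rho> (1, 0) $$ (i,i) \<noteq> 0"
proof -
  assume i: "i < n"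
  have "\<rho> (1, 0) $$ (i,i) * \<rho> (-1, 0) $$ (i,i) = \<rho> (0,0) $$ (i,i)"
    using diag_mult[of "(1,0)" "(-1,0)" i] i by simp
  then show ?thesis using rho_one i by auto
qed

lemma inj_rho: "inj_on \<rho> (carrier (BS m))" using sr by (simp add: special_rep_def)

lemma U_main: "\<exists>i0 e x0. i0 < e \<and> e < n \<and> x0 \<in> Zinv m \<and> x0 \<noteq> 0 \<and>
   (\<forall>c\<in>Zinv m. \<rho> (0, c) $$ (i0, e) = c * x0) \<and> \<rho> (1,0) $$ (i0,i0) = of_nat m * \<rho> (1,0) $$ (e,e)"
proof -
  have ne: "\<rho> (0, 1) \<noteq> 1\<^sub>m n"
  proof
    assume "\<rho> (0, 1) = 1\<^sub>m n"
    then have "\<rho> (0,1) = \<rho> (0,0)" using rho_one by simp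
    moreover have "(0::int, 1::rat) \<in> carrier (BS m)" "(0::int, 0::rat) \<in> carrier (BS m)" by simp_all
    ultimately have "(0::int, 1::rat) = (0, 0)" by (rule inj_onD[OF inj_rho])
    then show False by simp
  qed
  have "\<exists>i j. i < n \<and> j < n \<and> \<rho> (0, 1) $$ (i,j) \<noteq> 1\<^sub>m n $$ (i,j)"
  proof (rule ccontr)
    assume na: "\<not> (\<exists>i j. i < n \<and> j < n \<and> \<rho> (0, 1) $$ (i,j) \<noteq> 1\<^sub>m n $$ (i,j))"
    have c: "\<rho> (0, 1) \<in> carrier_mat n n" by (rule rho_car) simp
    have d: "dim_row (\<rho> (0, 1)) = n" "dim_col (\<rho> (0, 1)) = n" using carrier_matD[OF c] by simp_all
    have "\<rho> (0, 1) $$ (i, j) = 1\<^sub>m n $$ (i, j)" if "i < n" "j < n" for i j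
      using na that by blast
    then have "\<rho> (0, 1) = 1\<^sub>m n" using d by (intro eq_matI) simp_all
    then show False using ne by simp
  qed
  then obtain i j where ij: "i < n" "j < n" "\<rho> (0, 1) $$ (i,j) \<noteq> 1\<^sub>m n $$ (i,j)" by blast
  have ilj: "i < j"
  proof (rule ccontr)
    assume "\<not> i < j"
    then consider "i = j" | "j < i" by linarith
    then show False
    proof cases
      case 1 then show False using ij rho_U_diag[of 1 i] by simp
    next
      case 2 then show False using ij rho_ut[of "(0,1)" i j] by simp
    qed
  qed
  define S where "S = {s. 0 < s \<and> (\<exists>i c. c \<in> Zinv m \<and> i + s < n \<and> \<rho> (0, c) $$ (i, i + s) \<noteq> 0)}"
  have "j - i \<in> S" unfolding S_def using ij ilj
    by (intro CollectI conjI exI[of _ i] exI[of _ 1]) auto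
  then have "\<exists>s. s \<in> S" by blast
  define s where "s = (LEAST s. s \<in> S)"
  have sS: "s \<in> S" unfolding s_def using LeastI_ex[OF \<open>\<exists>s. s \<in> S\<close>] .
  then obtain i0 c0 where s0: "0 < s" "c0 \<in> Zinv m" "i0 + s < n" "\<rho> (0, c0) $$ (i0, i0 + s) \<noteq> 0"
    unfolding S_def by blast
  have van: "\<rho> (0, c) $$ (i, l) = 0" if "c \<in> Zinv m" "i < l" "l < i + s" "l < n" for c i l
  proof (rule ccontr)
    assume a: "\<rho> (0, c) $$ (i, l) \<noteq> 0"
    have "l - i \<in> S" unfolding S_def using that a by (intro CollectI conjI exI[of _ i] exI[of _ c]) auto
    then have "s \<le> l - i" unfolding s_def by (rule Least_le)
    then show False using that by linarith
  qed
  define e where "e = i0 + s"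
  have e: "i0 < e" "e < n" using s0 unfolding e_def by auto
  define \<phi> where "\<phi> c = \<rho> (0, c) $$ (i0, e)" for c
  have add: "\<phi> (c' + c) = \<phi> c + \<phi> c'" if c: "c \<in> Zinv m" "c' \<in> Zinv m" for c c'
  proof -
    have "\<rho> (0, c' + c) = \<rho> (0, c) * \<rho> (0, c')" using rho_mult[of "(0,c)" "(0,c')"] c by simp
    moreover have "(\<rho> (0, c) * \<rho> (0, c')) $$ (i0, e) = \<rho> (0, c) $$ (i0,i0) * \<rho> (0, c') $$ (i0,e) + \<rho> (0, c) $$ (i0,e) * \<rho> (0, c') $$ (e,e)"
    proof (rule entry_two)
      fix l assume l: "l < n" "l \<noteq> i0" "l \<noteq> e"
      consider "l < i0" | "i0 < l \<and> l < e" | "e < l" using l by linarith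
      then show "\<rho> (0, c) $$ (i0, l) * \<rho> (0, c') $$ (l, e) = 0"
      proof cases
        case 1 then show ?thesis using rho_ut[of "(0,c)" i0 l] c e by simp
      next
        case 2 then show ?thesis using van[of c i0 l] c e l unfolding e_def by simp
      next
        case 3 then show ?thesis using rho_ut[of "(0,c')" l e] c l by simp
      qed
    qed (use c e in auto)
    ultimately show ?thesis unfolding \<phi>_def using rho_U_diag c e by simp
  qed
  have phi0: "\<phi> 0 = 0" unfolding \<phi>_def using rho_one e by simp
  have neg: "\<phi> (- c) = - \<phi> c" if "c \<in> Zinv m" for c
    using add[of c "- c"] that Zinv_uminus[OF that] phi0 by simp
  have natm: "\<phi> (of_nat k * c) = of_nat k * \<phi> c" if "c \<in> Zinv m" for k c
  proof (induction k)
    case 0 then show ?case using phi0 by simp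
  next
    case (Suc k)
    have kc: "of_nat k * c \<in> Zinv m" using Zinv_mult[OF Zinv_nat that] .
    have "\<phi> (of_nat (Suc k) * c) = \<phi> (c + of_nat k * c)" by (simp add: algebra_simps)
    also have "\<dots> = \<phi> (of_nat k * c) + \<phi> c" by (rule add[OF kc that])
    finally show ?case using Suc by (simp add: algebra_simps)
  qed
  have intm: "\<phi> (of_int a * c) = of_int a * \<phi> c" if "c \<in> Zinv m" for a c
  proof (cases "a \<ge> 0")
    case True then show ?thesis using natm[OF that, of "nat a"] by simp
  next
    case False
    have "\<phi> (of_int a * c) = \<phi> (- (of_nat (nat (- a)) * c))" using False by simp
    also have "\<dots> = - \<phi> (of_nat (nat (- a)) * c)" by (rule neg[OF Zinv_mult[OF Zinv_nat that]])
    finally show ?thesis using natm[OF that, of "nat (- a)"] False by simp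
  qed
  have lin: "\<phi> c = c * \<phi> 1" if cz: "c \<in> Zinv m" for c
  proof -
    obtain a k where c: "c = of_int a / of_nat m ^ k" using cz by (rule ZinvE)
    define u where "u = 1 / (of_nat m ^ k :: rat)"
    have u: "u \<in> Zinv m" unfolding u_def by (rule Zinv_inv_pow)
    have "\<phi> 1 = \<phi> (of_nat (m ^ k) * u)" unfolding u_def using m0 by simp
    also have "\<dots> = of_nat (m ^ k) * \<phi> u" by (rule natm[OF u])
    finally have p1: "\<phi> 1 = of_nat m ^ k * \<phi> u" by simp
    have "\<phi> c = \<phi> (of_int a * u)" unfolding c u_def by simp
    also have "\<dots> = of_int a * \<phi> u" by (rule intm[OF u])
    finally show ?thesis unfolding p1 c using m0 by (simp add: field_simps)
  qed
  define x0 where "x0 = \<phi> 1"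
  have x0Z: "x0 \<in> Zinv m" unfolding x0_def \<phi>_def by (rule rho_entry) (use e in auto)
  have x0nz: "x0 \<noteq> 0" using lin[OF s0(2)] s0(4) unfolding x0_def \<phi>_def e_def by auto
  let ?T = "\<rho> (1, 0)"
  have rel: "?T $$ (i0,i0) * \<phi> c + ?T $$ (i0, e) = ?T $$ (i0, e) + \<phi> (of_nat m * c) * ?T $$ (e,e)"
    if c: "c \<in> Zinv m" for c
  proof -
    have mc: "of_nat m * c \<in> Zinv m" by (rule Zinv_mult[OF Zinv_nat c])
    have "?T * \<rho> (0, c) = \<rho> (BS_mult m (1,0) (0,c))" using rho_mult[of "(1,0)" "(0,c)"] c by simp
    also have "\<dots> = \<rho> (BS_mult m (0, of_nat m * c) (1,0))" by simp
    also have "\<dots> = \<rho> (0, of_nat m * c) * ?T" using rho_mult[of "(0, of_nat m * c)" "(1,0)"] mc by simp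
    finally have eq: "?T * \<rho> (0, c) = \<rho> (0, of_nat m * c) * ?T" .
    have L: "(?T * \<rho> (0, c)) $$ (i0, e) = ?T $$ (i0,i0) * \<rho> (0, c) $$ (i0,e) + ?T $$ (i0,e) * \<rho> (0, c) $$ (e,e)"
    proof (rule entry_two)
      fix l assume l: "l < n" "l \<noteq> i0" "l \<noteq> e"
      consider "l < i0" | "i0 < l \<and> l < e" | "e < l" using l by linarith
      then show "?T $$ (i0, l) * \<rho> (0, c) $$ (l, e) = 0"
      proof cases
        case 1 then show ?thesis using rho_ut[of "(1,0)" i0 l] e by simp
      next
        case 2 then show ?thesis using van[of c l e] c e l unfolding e_def by simp
      next
        case 3 then show ?thesis using rho_ut[of "(0,c)" l e] c l by simp
      qed
    qed (use c e in auto)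
    have R: "(\<rho> (0, of_nat m * c) * ?T) $$ (i0, e) = \<rho> (0, of_nat m * c) $$ (i0,i0) * ?T $$ (i0,e) + \<rho> (0, of_nat m * c) $$ (i0,e) * ?T $$ (e,e)"
    proof (rule entry_two)
      fix l assume l: "l < n" "l \<noteq> i0" "l \<noteq> e"
      consider "l < i0" | "i0 < l \<and> l < e" | "e < l" using l by linarith
      then show "\<rho> (0, of_nat m * c) $$ (i0, l) * ?T $$ (l, e) = 0"
      proof cases
        case 1 then show ?thesis using rho_ut[of "(0, of_nat m * c)" i0 l] mc e by simp
      next
        case 2 then show ?thesis using van[of "of_nat m * c" i0 l] mc e l unfolding e_def by simp
      next
        case 3 then show ?thesis using rho_ut[of "(1,0)" l e] l by simp
      qed
    qed (use mc e in auto)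
    show ?thesis using L R eq rho_U_diag[OF c] rho_U_diag[OF mc] e unfolding \<phi>_def by simp
  qed
  have "?T $$ (i0,i0) * x0 = \<phi> (of_nat m) * ?T $$ (e,e)" using rel[of 1] unfolding x0_def by simp
  also have "\<phi> (of_nat m) = of_nat m * x0" using lin[of "of_nat m"] unfolding x0_def by simp
  finally have "?T $$ (i0,i0) * x0 = (of_nat m * ?T $$ (e,e)) * x0" by (simp add: algebra_simps)
  then have dm: "?T $$ (i0,i0) = of_nat m * ?T $$ (e,e)" using x0nz by simp
  show ?thesis
    using e x0Z x0nz dm lin unfolding \<phi>_def x0_def by blast
qed

end



lemma pow_sub_dvd: "(x::int) - 1 dvd x ^ q - 1"
proof (induction q)
  case 0 then show ?case by simp
next
  case (Suc q)
  have "x ^ Suc q - 1 = x * (x ^ q - 1) + (x - 1)" by (simp add: algebra_simps)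
  then show ?case using Suc by (metis dvd_add dvd_mult dvd_refl)
qed

lemma ord_lemma:
  fixes m j K :: nat
  assumes m: "m \<ge> 2" and j: "j > 0" and d: "(int m ^ j - 1) dvd (int m ^ K - 1)"
  shows "j dvd K"
proof -
  define q r where "q = K div j" and "r = K mod j"
  have K: "K = j * q + r" unfolding q_def r_def by simp
  have rj: "r < j" unfolding r_def using j by simp
  let ?M = "int m ^ j - 1"
  have e: "int m ^ K - 1 = int m ^ r * ((int m ^ j) ^ q - 1) + (int m ^ r - 1)"
    unfolding K by (simp add: power_add power_mult algebra_simps)
  have "?M dvd int m ^ r * ((int m ^ j) ^ q - 1)" using pow_sub_dvd[of "int m ^ j" q] by (simp add: dvd_mult)
  then have dr: "?M dvd int m ^ r - 1" using d unfolding e by (simp add: dvd_add_right_iff)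
  have m1: "(1::int) < int m" using m by simp
  have lt: "int m ^ r < int m ^ j" using m1 rj by simp
  have ge: "1 \<le> int m ^ r" using m1 by simp
  have "int m ^ r - 1 = 0"
  proof (rule ccontr)
    assume "int m ^ r - 1 \<noteq> 0"
    then have "0 < int m ^ r - 1" using ge by simp
    then have "?M \<le> int m ^ r - 1" using zdvd_imp_le[OF dr] by simp
    then show False using lt by simp
  qed
  then have "int m ^ r = int m ^ 0" by simp
  then have "r = 0" using m1 by (metis power_inject_exp)
  then show ?thesis using r_def by (simp add: dvd_eq_mod_eq_0)
qed

lemma Zinv_dvd_int:
  fixes N m :: nat and y :: int
  assumes cop: "coprime N m" and e: "of_int y = of_nat N * w" and w: "w \<in> Zinv m" and m: "m > 0"
  shows "int N dvd y"
proof -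
  obtain a k where a: "w = of_int a / of_nat m ^ k" using w by (rule ZinvE)
  have "(of_int (y * int m ^ k) :: rat) = of_int (int N * a)"
    using e m unfolding a by (simp add: field_simps)
  then have "y * int m ^ k = int N * a" by (simp only: of_int_eq_iff)
  then have "int N dvd y * int m ^ k" by (metis dvd_triv_left)
  moreover have "coprime (int N) (int m ^ k)" using cop by simp
  ultimately show ?thesis by (simp add: coprime_dvd_mult_left_iff)
qed

lemma mpow_cong:
  fixes m j N' :: nat and k :: int
  assumes m: "m \<ge> 2" and j: "j > 0" and dN: "(m ^ j - 1) dvd N'" and cop: "coprime N' m"
    and e: "(of_nat m :: rat) powi k - 1 = of_nat N' * w" and w: "w \<in> Zinv m"
  shows "int j dvd k"
proof -
  have m0: "m > 0" using m by simp
  have key: "j dvd K" if eK: "(of_nat m :: rat) ^ K - 1 = of_nat N' * w'" and w': "w' \<in> Zinv m" for K w'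
  proof -
    have "of_int (int m ^ K - 1) = of_nat N' * w'" using eK by simp
    then have "int N' dvd int m ^ K - 1" by (rule Zinv_dvd_int[OF cop _ w' m0])
    moreover have "int m ^ j - 1 dvd int N'"
    proof -
      obtain c where c: "N' = (m ^ j - 1) * c" using dN by blast
      have "int (m ^ j - 1) = int m ^ j - 1" using m0 by (simp add: of_nat_diff)
      then have "int N' = (int m ^ j - 1) * int c" unfolding c by (simp only: of_nat_mult)
      then show ?thesis by (rule dvdI)
    qed
    ultimately have "int m ^ j - 1 dvd int m ^ K - 1" by (rule dvd_trans[rotated])
    then show ?thesis by (rule ord_lemma[OF m j])
  qed
  show ?thesis
  proof (cases "k \<ge> 0")
    case True
    have "(of_nat m :: rat) ^ nat k - 1 = of_nat N' * w" using e True by (simp add: power_int_def)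
    then have "j dvd nat k" by (rule key[OF _ w])
    then have "int j dvd int (nat k)" by (simp only: int_dvd_int_iff)
    then show ?thesis using True by simp
  next
    case False
    define K where "K = nat (- k)"
    have pk: "(of_nat m :: rat) powi k = 1 / of_nat m ^ K"
      unfolding K_def using False by (simp add: power_int_def field_simps)
    have "(of_nat m :: rat) ^ K - 1 = of_nat N' * (- (w * of_nat m ^ K))"
    proof -
      have "1 / (of_nat m :: rat) ^ K - 1 = of_nat N' * w" using e pk by simp
      then have "1 - (of_nat m :: rat) ^ K = of_nat N' * w * of_nat m ^ K" using m0 by (simp add: field_simps)
      then show ?thesis by (simp add: algebra_simps)
    qed
    moreover have "- (w * of_nat m ^ K) \<in> Zinv m" using Zinv_uminus[OF Zinv_mult[OF w Zinv_nat[of "m^K"]]] by simp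
    ultimately have "j dvd K" by (rule key)
    then have "int j dvd int K" by (simp only: int_dvd_int_iff)
    moreover have "int K = - k" unfolding K_def using False by simp
    ultimately show ?thesis by simp
  qed
qed

lemma coprime_part:
  assumes x: "x0 \<in> Zinv m" and nz: "x0 \<noteq> 0" and m: "m > 0"
  shows "\<exists>p>0. coprime p m \<and> of_nat p / x0 \<in> Zinv m"
proof -
  obtain a k where a: "x0 = of_int a / of_nat m ^ k" using x by (rule ZinvE)
  have a0: "a \<noteq> 0" using nz a by auto
  have ex: "\<exists>p. 0 < p \<and> of_nat p / x0 \<in> Zinv m"
  proof (intro exI conjI)
    show "0 < nat \<bar>a\<bar>" using a0 by simp
    have eq: "of_nat (nat \<bar>a\<bar>) / x0 = of_int (sgn a * int m ^ k)"
      using a0 m unfolding a by (simp add: field_simps abs_if sgn_if)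
    show "of_nat (nat \<bar>a\<bar>) / x0 \<in> Zinv m" unfolding eq by (rule Zinv_int)
  qed
  define p where "p = (LEAST p. 0 < p \<and> of_nat p / x0 \<in> Zinv m)"
  have p: "0 < p" "of_nat p / x0 \<in> Zinv m" using LeastI_ex[OF ex] unfolding p_def by auto
  have "coprime p m"
  proof (rule ccontr)
    assume nc: "\<not> coprime p m"
    define g where "g = gcd p m"
    have g1: "g \<noteq> 1" using nc unfolding g_def by (simp add: coprime_iff_gcd_eq_1)
    have gp: "g > 0" using p(1) unfolding g_def by simp
    have gP: "g dvd p" and gm: "g dvd m" unfolding g_def by simp_all
    define p' where "p' = p div g"
    have pp': "p = p' * g" using gP unfolding p'_def by simp
    have p'p: "p' > 0" using p(1) pp' by (cases "p' = 0") auto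
    have g2: "g \<ge> 2" using gp g1 by linarith
    have "p' * 2 \<le> p' * g" using g2 by (rule mult_le_mono2)
    then have p'l: "p' < p" using pp' p'p by linarith
    have "of_nat p' / x0 = (of_nat p / x0) * (1 / of_nat g)" using gp unfolding pp' by simp
    moreover have "(of_nat p / x0) * (1 / of_nat g) \<in> Zinv m" by (rule Zinv_mult[OF p(2) Zinv_dvd_inv[OF m gm]])
    ultimately have "of_nat p' / x0 \<in> Zinv m" by simp
    then have "p \<le> p'" unfolding p_def using p'p by (intro Least_le) simp
    then show False using p'l by simp
  qed
  then show ?thesis using p by blast
qed




lemma over_one: "over_Zinv m (1\<^sub>m n)"
  unfolding over_Zinv_def by simp

context srepH begin

lemma csp: "\<exists>N>0. coprime N m \<and> cong_subgroup m n (\<rho> ` carrier (BS m)) N \<subseteq> H"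
proof -
  obtain j N where j: "j > 0" and N: "N > 0" "coprime N m"
    and Hm': "\<forall>x. snd x \<in> Zinv m \<longrightarrow> int j dvd fst x \<longrightarrow> (\<exists>z\<in>Zinv m. snd x = of_nat N * z) \<longrightarrow> \<rho> x \<in> H"
    using H_main by (elim exE conjE)
  have Hm: "\<rho> x \<in> H" if "snd x \<in> Zinv m" "int j dvd fst x" "\<exists>z\<in>Zinv m. snd x = of_nat N * z" for x
    by (rule Hm'[rule_format, OF that])
  obtain i0 e x0 where ie: "i0 < e" "e < n" and x0: "x0 \<in> Zinv m" "x0 \<noteq> 0"
    and lin': "\<forall>c\<in>Zinv m. \<rho> (0, c) $$ (i0, e) = c * x0"
    and dm: "\<rho> (1,0) $$ (i0,i0) = of_nat m * \<rho> (1,0) $$ (e,e)"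
    using U_main by (elim exE conjE)
  have lin: "\<rho> (0, c) $$ (i0, e) = c * x0" if "c \<in> Zinv m" for c using lin' that by simp
  obtain p where p: "p > 0" "coprime p m" "of_nat p / x0 \<in> Zinv m"
    using coprime_part[OF x0 m0] by (elim exE conjE)
  define N' where "N' = N * (m - 1) * p * (m ^ j - 1)"
  have "m ^ 1 \<le> m ^ j" by (rule power_increasing) (use j m2 in auto)
  then have mj: "m ^ j \<ge> 2" using m2 by simp
  have N'p: "N' > 0" unfolding N'_def using N(1) m2 p(1) mj by simp
  have c1: "coprime (m - 1) m" using coprime_diff_one_left_nat[OF m0] .
  have cc: "coprime (m ^ j - 1) (m ^ j)" by (rule coprime_diff_one_left_nat) (use m0 in simp)
  then have c2: "coprime (m ^ j - 1) m" using j by (simp add: coprime_power_right_iff)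
  have cop: "coprime N' m" unfolding N'_def using N(2) c1 p(2) c2 by simp
  have dvdN': "(m ^ j - 1) dvd N'" unfolding N'_def by simp
  have "A \<in> H" if A: "A \<in> cong_subgroup m n (\<rho> ` carrier (BS m)) N'" for A
  proof -
    have A2: "A \<in> \<rho> ` carrier (BS m) \<and> (\<forall>i<n. \<forall>j<n. \<exists>z\<in>Zinv m. A $$ (i,j) - (1\<^sub>m n :: rat mat) $$ (i,j) = of_nat N' * z)"
      using A unfolding cong_subgroup_def by (rule CollectD)
    have hMC0: "MC m n N' A (1\<^sub>m n)" unfolding MC_def using A2 by (rule conjunct2)
    from A2 obtain x where xc: "x \<in> carrier (BS m)" and Ax: "A = \<rho> x" by (elim conjE imageE)
    have hMC: "MC m n N' (\<rho> x) (1\<^sub>m n)" using hMC0 unfolding Ax .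
    define k where "k = fst x"
    define b where "b = snd x"
    have kb: "x = (k, b)" unfolding k_def b_def by simp
    have bZ: "b \<in> Zinv m" using xc unfolding b_def by (simp only: carBS)
    let ?D = "\<rho> (1,0) $$ (i0,i0)" and ?E = "\<rho> (1,0) $$ (e,e)"
    have i0n: "i0 < n" using ie by simp
    have dg: "\<rho> (k, b) $$ (i, i) = \<rho> (1,0) $$ (i,i) powi k" if "i < n" for i
      using diag_k0[OF bZ that, of k] diag_pow[OF that, of k] by (rule trans)
    obtain z1 where z1: "z1 \<in> Zinv m" "\<rho> x $$ (i0,i0) - 1\<^sub>m n $$ (i0,i0) = of_nat N' * z1"
      using hMC i0n unfolding MC_def by blast
    obtain z2 where z2: "z2 \<in> Zinv m" "\<rho> x $$ (e,e) - 1\<^sub>m n $$ (e,e) = of_nat N' * z2"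
      using hMC ie unfolding MC_def by blast
    have e1: "?D powi k - 1 = of_nat N' * z1" using z1(2) dg[OF i0n] i0n unfolding kb by simp
    have e2: "?E powi k - 1 = of_nat N' * z2" using z2(2) dg[OF ie(2)] ie unfolding kb by simp
    have Enz: "?E \<noteq> 0" by (rule diag_nz[OF ie(2)])
    have Dk: "?D powi k = of_nat m powi k * ?E powi k" unfolding dm by (simp add: power_int_mult_distrib)
    have Einv: "?E powi k * ?E powi (-k) = 1"
    proof -
      have "?E powi k * ?E powi (-k) = ?E powi (k + - k)" using Enz by (rule power_int_add[symmetric, OF disjI1])
      then show ?thesis by simp
    qed
    have EZ: "?E powi (-k) \<in> Zinv m"
    proof -
      have "?E powi (-k) = \<rho> (-k, 0) $$ (e,e)" by (rule sym[OF diag_pow[OF ie(2), of "-k"]])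
      moreover have "\<rho> (-k, 0) $$ (e,e) \<in> Zinv m" by (rule rho_entry) (use ie in simp_all)
      ultimately show ?thesis by simp
    qed
    have "(of_nat m powi k - 1) * ?E powi k = of_nat N' * (z1 - z2)"
      using e1 e2 Dk by (simp add: algebra_simps)
    then have "(of_nat m powi k - 1) * ?E powi k * ?E powi (-k) = of_nat N' * (z1 - z2) * ?E powi (-k)" by simp
    then have em: "(of_nat m :: rat) powi k - 1 = of_nat N' * ((z1 - z2) * ?E powi (-k))"
      using Einv by (simp add: mult.assoc)
    have wZ: "(z1 - z2) * ?E powi (-k) \<in> Zinv m" by (rule Zinv_mult[OF Zinv_diff[OF m0 z1(1) z2(1)] EZ])
    have jk: "int j dvd k" by (rule mpow_cong[OF m2 j dvdN' cop em wZ])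
    let ?T = "\<rho> (1,0)" and ?Ti = "\<rho> (-1,0)" and ?X = "\<rho> (k,b)" and ?Xi = "\<rho> (binv m (k,b))" and ?I = "1\<^sub>m n :: rat mat"
    have sX: "snd (k,b) \<in> Zinv m" using bZ by simp
    have sXi: "snd (binv m (k,b)) \<in> Zinv m" by (rule binv_closed[OF sX])
    have cT: "?T \<in> carrier_mat n n" and cTi: "?Ti \<in> carrier_mat n n" and cX: "?X \<in> carrier_mat n n"
      and cXi: "?Xi \<in> carrier_mat n n" by (simp_all add: rho_car[OF sX] rho_car[OF sXi])
    have oT: "over_Zinv m ?T" and oTi: "over_Zinv m ?Ti" and oX: "over_Zinv m ?X" and oXi: "over_Zinv m ?Xi"
      by (simp_all add: rho_ov[OF sX] rho_ov[OF sXi] rho_ov)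
    have TTi: "?T * ?Ti = ?I" using rho_mult[of "(1,0)" "(-1,0)"] rho_one by simp
    have XXi: "?X * ?Xi = ?I" by (rule rho_inv_r[OF sX])
    have hX: "MC m n N' ?X ?I" using hMC kb by simp
    have h1: "MC m n N' (?T * ?X) ?T"
      using MC_mult[OF m0 cT cT cX one_carrier_mat oT oX MC_refl hX] cT by simp
    have h2: "MC m n N' (?T * ?X * ?Ti) ?I"
      using MC_mult[OF m0 mult_carrier_mat[OF cT cX] cT cTi cTi oT oTi h1 MC_refl] TTi by simp
    have h3: "MC m n N' ?Xi ?I"
      using MC_mult[OF m0 one_carrier_mat cX cXi cXi oX oXi MC_sym[OF hX] MC_refl] XXi cXi by simp
    have h4: "MC m n N' (?T * ?X * ?Ti * ?Xi) ?I"
      using MC_mult[OF m0 mult_carrier_mat[OF mult_carrier_mat[OF cT cX] cTi] one_carrier_mat cXi one_carrier_mat over_one oXi h2 h3] by simp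
    define g where "g = BS_mult m (BS_mult m (BS_mult m (1,0) (k,b)) (-1,0)) (binv m (k,b))"
    have s1: "snd (BS_mult m (1,0) (k,b)) \<in> Zinv m" using BS_closed[of "(1,0)" "(k,b)"] sX by simp
    have s2: "snd (BS_mult m (BS_mult m (1,0) (k,b)) (-1,0)) \<in> Zinv m" using BS_closed[OF s1, of "(-1,0)"] by simp
    have s0: "snd (1::int, 0::rat) \<in> Zinv m" and sm1: "snd (-1::int, 0::rat) \<in> Zinv m" by simp_all
    have rg: "\<rho> g = ?T * ?X * ?Ti * ?Xi"
      unfolding g_def rho_mult[OF s2 sXi] rho_mult[OF s1 sm1] rho_mult[OF s0 sX] by (rule refl)
    have mk: "(of_nat m :: rat) powi k \<noteq> 0" using m0 by (simp add: power_int_not_zero)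
    have gv: "g = (0, (of_nat m - 1) * b)"
      unfolding g_def using mk by (simp add: binv_def field_simps)
    have "\<exists>z\<in>Zinv m. \<rho> g $$ (i0,e) - ?I $$ (i0,e) = of_nat N' * z"
      using h4 i0n ie(2) unfolding MC_def rg by blast
    then obtain z3 where z3: "z3 \<in> Zinv m" "\<rho> g $$ (i0,e) - ?I $$ (i0,e) = of_nat N' * z3" by blast
    have mbZ: "(of_nat m - 1) * b \<in> Zinv m" using Zinv_mult[OF Zinv_diff[OF m0 Zinv_nat[of m] Zinv_1] bZ] .
    have "\<rho> g $$ (i0,e) = (of_nat m - 1) * b * x0" unfolding gv by (rule lin[OF mbZ])
    then have eq3: "(of_nat m - 1) * b * x0 = of_nat N' * z3" using z3(2) ie i0n by simp
    have m1: "(of_nat (m - 1) :: rat) = of_nat m - 1" using m0 by (simp add: of_nat_diff)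
    have mj1: "(of_nat (m ^ j - 1) :: rat) = of_nat m ^ j - 1" using mj by (simp add: of_nat_diff)
    have m1': "(of_nat (m - Suc 0) :: rat) = of_nat m - 1" using m0 by (simp add: of_nat_diff)
    have mm1: "(of_nat m - 1 :: rat) \<noteq> 0" using m2 by simp
    define z where "z = (of_nat p / x0) * of_nat (m ^ j - 1) * z3"
    have zZ: "z \<in> Zinv m" unfolding z_def by (rule Zinv_mult[OF Zinv_mult[OF p(3) Zinv_nat] z3(1)])
    have "b = of_nat N * z"
    proof -
      have "(of_nat m - 1) * b * x0 = (of_nat m - 1) * (of_nat N * z * x0)"
        unfolding eq3 N'_def z_def using x0(2) by (simp add: m1 m1' field_simps)
      then have "b * x0 = of_nat N * z * x0" using mm1 by (simp add: mult.assoc)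
      then show ?thesis using x0(2) by simp
    qed
    then have "\<rho> (k, b) \<in> H" by (intro Hm) (use sX jk zZ in auto)
    then show ?thesis unfolding Ax kb .
  qed
  then show ?thesis using N'p cop by blast
qed

end

theorem proposition4p7:
  fixes m n :: nat and \<rho> :: "int \<times> rat \<Rightarrow> rat mat"
  assumes "m \<ge> 2" and "n \<ge> 1" and "special_rep m n \<rho>"
  shows "has_CSP m n (\<rho> ` carrier (BS m))"
proof -
  interpret srep m n \<rho> by unfold_locales (use assms in auto)
  show ?thesis unfolding has_CSP_def
  proof (intro allI impI)
    fix H assume H: "subgroup H ((GL_group m n)\<lparr>carrier := \<rho> ` carrier (BS m)\<rparr>) \<and>
        finite {H #>\<^bsub>GL_group m n\<^esub> g | g. g \<in> \<rho> ` carrier (BS m)}"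
    have "srepH m n \<rho> H" by (intro srepH.intro srep_axioms srepH_axioms.intro) (use H in blast)+
    then interpret srepH m n \<rho> H .
    show "\<exists>N>0. coprime N m \<and> cong_subgroup m n (\<rho> ` carrier (BS m)) N \<subseteq> H" by (rule csp)
  qed
qed


end
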